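(* Let $f(\mathbf z)$ be a weighted homogeneous polynomial in $\mathbf z=(z_1,\dots,z_n)$ with strictly positive weight vector $R=(r_1,\dots,r_n)$ and degree $d(R)>0$, which is non-degenerate, Łojasiewicz non-degenerate, has an isolated singularity at the origin, and satisfies $\dim\Gamma(f)=n-1$. Then $\ell_0(f)\le\eta(R)=d(R)/\min_ir_i-1$.
   Context: $f$ is weighted homogeneous with weight $R$ and degree $d(R)$ if every monomial $\mathbf z^\nu$ with non-zero coefficient satisfies $\sum_ir_i\nu_i=d(R)$. $\Gamma_+(g)$ is the convex hull of $\bigcup_{c_\nu\ne0}(\nu+\mathbb R_{\ge0}^n)$ for $g=\sum c_\nu\mathbf z^\nu$; $\Gamma(g)$ is the union of compact faces. For a weight $P$, $g_P$ is the sum of terms of $g$ whose exponents lie on the face of $\Gamma_+(g)$ where $\nu\mapsto\sum p_i\nu_i$ is minimal. $f$ is non-degenerate if for each strictly positive $P$, $f_P$ has no critical point in $(\mathbb C^* )^n$. $\ell_0(f)$ is the infimum of $\theta>0$ with $\|\partial f(\mathbf z)\|\ge c\|\mathbf z\|^\theta$ near $\mathbf 0$ for some $c>0$, $\partial f=(f_1,\dots,f_n)$, $f_i=\partial f/\partial z_i$. Łojasiewicz non-degeneracy: for $I\subset\{1,\dots,n\}$ with $f|_{\mathbb C^I}\equiv0$, where $\mathbb C^I=\{\mathbf z:z_k=0,\ k\notin I\}$ (a vanishing coordinate subspace), and $i\in I$, let $J_i$ be the set of $j\notin I$ such that some monomial $z_i^az_j$ ($a\ge1$) has a non-zero coefficient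 in $f$. $f$ is Łojasiewicz non-degenerate if for every vanishing coordinate subspace $\mathbb C^I$, every $P=(p_i)_{i\in I}$ with all $p_i>0$, and every $\mathbf a\in(\mathbb C^* )^I$, there is $j\in\bigcup_{i\in I'}J_i$, $I'=\{i\in I:p_i=\min_{k\in I}p_k\}$, with $((f_j)^I)_P(\mathbf a)\ne0$; here $(f_j)^I$ is the restriction of $f_j$ to $\mathbb C^I$ as a polynomial in $(z_i)_{i\in I}$ and $(\cdot)_P$ its face function with respect to $P$. *)

theory Defs
  imports "HOL-Analysis.Analysis"
begin

text \<open>Polynomials in the variables z_i, i in the finite index type 'n (so n = CARD('n)),
  with complex coefficients, are represented by their coefficient function on exponent
  vectors nu :: 'n => nat.\<close>

type_synonym 'n cpoly = "('n \<Rightarrow> nat) \<Rightarrow> complex"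

definition supp_poly :: "'n cpoly \<Rightarrow> ('n \<Rightarrow> nat) set" where
  "supp_poly g = {\<nu>. g \<nu> \<noteq> 0}"

definition is_poly :: "'n cpoly \<Rightarrow> bool" where
  "is_poly g \<longleftrightarrow> finite (supp_poly g)"

definition peval :: "('n::finite) cpoly \<Rightarrow> complex^'n \<Rightarrow> complex" where
  "peval g z = (\<Sum>\<nu>\<in>supp_poly g. g \<nu> * (\<Prod>i\<in>UNIV. (z$i) ^ (\<nu> i)))"

definition pderiv_poly :: "'n \<Rightarrow> 'n cpoly \<Rightarrow> 'n cpoly" where
  "pderiv_poly i g = (\<lambda>\<nu>. of_nat (\<nu> i + 1) * g (\<nu>(i := \<nu> i + 1)))"

definition grad :: "('n::finite) cpoly \<Rightarrow> complex^'n \<Rightarrow> complex^'n" where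
  "grad g z = (\<chi> i. peval (pderiv_poly i g) z)"

definition weighted_homogeneous :: "('n::finite) cpoly \<Rightarrow> ('n \<Rightarrow> real) \<Rightarrow> real \<Rightarrow> bool" where
  "weighted_homogeneous g r d \<longleftrightarrow>
     (\<forall>\<nu>\<in>supp_poly g. (\<Sum>i\<in>UNIV. r i * real (\<nu> i)) = d)"

text \<open>Newton polyhedron Gamma_+ of a polynomial g in the variables indexed by I,
  realised inside the coordinate subspace R^I of R^n (for I = UNIV this is the usual one).\<close>
definition newton_plus :: "'n set \<Rightarrow> ('n::finite) cpoly \<Rightarrow> (real^'n) set" where
  "newton_plus I g = convex hull
     (\<Union>\<nu>\<in>supp_poly g. {x. (\<forall>i\<in>I. real (\<nu> i) \<le> x$i) \<and> (\<forall>k. k \<notin> I \<longrightarrow> x$k = 0)})"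

text \<open>Face function g_P: the terms of g whose exponents lie on the face of Gamma_+(g)
  on which the linear function x |-> sum p_i x_i (i in I) is minimal.\<close>
definition face_fun :: "'n set \<Rightarrow> ('n \<Rightarrow> real) \<Rightarrow> ('n::finite) cpoly \<Rightarrow> 'n cpoly" where
  "face_fun I P g = (\<lambda>\<nu>. if \<nu> \<in> supp_poly g \<and>
        (\<forall>x\<in>newton_plus I g. (\<Sum>i\<in>I. P i * real (\<nu> i)) \<le> (\<Sum>i\<in>I. P i * x$i))
      then g \<nu> else 0)"

definition newton_boundary :: "('n::finite) cpoly \<Rightarrow> (real^'n) set" where
  "newton_boundary g = \<Union>{F. F face_of newton_plus UNIV g \<and> compact F}"

definition newton_boundary_dim :: "('n::finite) cpoly \<Rightarrow> int" where
  "newton_boundary_dim g =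
     Max {aff_dim F | F. F face_of newton_plus UNIV g \<and> compact F \<and> F \<noteq> {}}"

definition nondegenerate :: "('n::finite) cpoly \<Rightarrow> bool" where
  "nondegenerate f \<longleftrightarrow>
     (\<forall>P. (\<forall>i. P i > 0) \<longrightarrow>
        \<not> (\<exists>z::complex^'n. (\<forall>i. z$i \<noteq> 0) \<and> grad (face_fun UNIV P f) z = 0))"

definition restrict_poly :: "'n set \<Rightarrow> 'n cpoly \<Rightarrow> 'n cpoly" where
  "restrict_poly I g = (\<lambda>\<nu>. if \<forall>k. k \<notin> I \<longrightarrow> \<nu> k = 0 then g \<nu> else 0)"

definition vanishing_coord_subspace :: "('n::finite) cpoly \<Rightarrow> 'n set \<Rightarrow> bool" where
  "vanishing_coord_subspace f I \<longleftrightarrow>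
     I \<noteq> {} \<and> (\<forall>z::complex^'n. (\<forall>k. k \<notin> I \<longrightarrow> z$k = 0) \<longrightarrow> peval f z = 0)"

definition J_set :: "'n cpoly \<Rightarrow> 'n set \<Rightarrow> 'n \<Rightarrow> 'n set" where
  "J_set f I i = {j. j \<notin> I \<and> (\<exists>a::nat. a \<ge> 1 \<and>
      f (\<lambda>k. if k = i then a else if k = j then 1 else 0) \<noteq> 0)}"

definition loj_nondegenerate :: "('n::finite) cpoly \<Rightarrow> bool" where
  "loj_nondegenerate f \<longleftrightarrow>
     (\<forall>I. vanishing_coord_subspace f I \<longrightarrow>
       (\<forall>P::'n \<Rightarrow> real. (\<forall>i\<in>I. P i > 0) \<longrightarrow>
         (\<forall>a::complex^'n. (\<forall>i\<in>I. a$i \<noteq> 0) \<and> (\<forall>k. k \<notin> I \<longrightarrow> a$k = 0) \<longrightarrow>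
           (\<exists>j\<in>(\<Union>i\<in>{i\<in>I. P i = Min (P ` I)}. J_set f I i).
              peval (face_fun I P (restrict_poly I (pderiv_poly j f))) a \<noteq> 0))))"

definition isolated_singularity_origin :: "('n::finite) cpoly \<Rightarrow> bool" where
  "isolated_singularity_origin f \<longleftrightarrow>
     (\<exists>\<epsilon>>0. \<forall>z::complex^'n. norm z < \<epsilon> \<and> grad f z = 0 \<longrightarrow> z = 0)"

definition loj_exponent :: "('n::finite) cpoly \<Rightarrow> real" where
  "loj_exponent f = Inf {\<theta>. \<theta> > 0 \<and> (\<exists>c>0. \<exists>\<epsilon>>0. \<forall>z::complex^'n.
       norm z < \<epsilon> \<longrightarrow> norm (grad f z) \<ge> c * norm z powr \<theta>)}"

end

theory Submission
  imports Defs
begin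

definition scl :: "('n::finite \<Rightarrow> real) \<Rightarrow> real \<Rightarrow> complex^'n \<Rightarrow> complex^'n" where
  "scl r s w = (\<chi> j. complex_of_real (s powr r j) * w$j)"

lemma wh_pderiv:
  assumes "weighted_homogeneous f r d"
  shows "weighted_homogeneous (pderiv_poly i f) r (d - r i)"
  unfolding weighted_homogeneous_def
proof
  fix \<nu> assume "\<nu> \<in> supp_poly (pderiv_poly i f)"
  then have "f (\<nu>(i := \<nu> i + 1)) \<noteq> 0" by (simp add: supp_poly_def pderiv_poly_def)
  then have "(\<Sum>j\<in>UNIV. r j * real ((\<nu>(i := \<nu> i + 1)) j)) = d"
    using assms by (auto simp: weighted_homogeneous_def supp_poly_def)
  moreover have "(\<Sum>j\<in>UNIV. r j * real ((\<nu>(i := \<nu> i + 1)) j))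
      = (\<Sum>j\<in>UNIV. r j * real (\<nu> j) + (if j = i then r i else 0))"
    by (rule sum.cong) (auto simp: algebra_simps)
  moreover have "\<dots> = (\<Sum>j\<in>UNIV. r j * real (\<nu> j)) + r i"
    by (simp add: sum.distrib)
  ultimately show "(\<Sum>j\<in>UNIV. r j * real (\<nu> j)) = d - r i" by simp
qed

lemma hom_scale:
  fixes g :: "('n::finite) cpoly"
  assumes "weighted_homogeneous g r e" "s > 0"
  shows "peval g (scl r s w) = complex_of_real (s powr e) * peval g w"
  unfolding peval_def sum_distrib_left
proof (rule sum.cong[OF refl])
  fix \<nu> assume nu: "\<nu> \<in> supp_poly g"
  have "(\<Prod>i\<in>UNIV. (scl r s w $ i) ^ \<nu> i)
      = (\<Prod>i\<in>UNIV. complex_of_real (s powr r i) ^ \<nu> i) * (\<Prod>i\<in>UNIV. (w $ i) ^ \<nu> i)"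
    by (simp add: scl_def power_mult_distrib prod.distrib)
  also have "(\<Prod>i\<in>UNIV. complex_of_real (s powr r i) ^ \<nu> i)
      = complex_of_real (\<Prod>i\<in>UNIV. s powr (r i * real (\<nu> i)))"
    unfolding of_real_prod
  proof (rule prod.cong[OF refl])
    fix i :: 'n
    have "(s powr r i) ^ \<nu> i = s powr (r i * real (\<nu> i))"
      using assms(2) by (simp add: powr_power mult.commute)
    then show "complex_of_real (s powr r i) ^ \<nu> i = complex_of_real (s powr (r i * real (\<nu> i)))"
      by (metis of_real_power)
  qed
  also have "(\<Prod>i\<in>UNIV. s powr (r i * real (\<nu> i))) = s powr (\<Sum>i\<in>UNIV. r i * real (\<nu> i))"
    using assms(2) by (simp add: powr_sum)
  also have "\<dots> = s powr e" using assms(1) nu by (simp add: weighted_homogeneous_def)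
  finally show "g \<nu> * (\<Prod>i\<in>UNIV. (scl r s w $ i) ^ \<nu> i)
      = complex_of_real (s powr e) * (g \<nu> * (\<Prod>i\<in>UNIV. (w $ i) ^ \<nu> i))"
    by simp
qed

lemma norm_scl_le:
  fixes r :: "'n::finite \<Rightarrow> real"
  assumes "\<forall>i. r i > 0" "0 < s" "s \<le> 1" "\<forall>j. cmod (w$j) \<le> 1"
  shows "norm (scl r s w) \<le> real CARD('n) * s powr Min (range r)"
proof -
  have "norm (scl r s w) \<le> (\<Sum>j\<in>UNIV. norm (scl r s w $ j))"
    unfolding norm_vec_def by (rule L2_set_le_sum) auto
  also have "\<dots> \<le> (\<Sum>j\<in>(UNIV::'n set). s powr Min (range r))"
  proof (rule sum_mono)
    fix j :: 'n
    have "norm (scl r s w $ j) = s powr r j * cmod (w$j)"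
      by (simp add: scl_def norm_mult)
    also have "\<dots> \<le> s powr r j" using assms(4)
      by (simp add: mult_left_le)
    also have "\<dots> \<le> s powr Min (range r)"
      by (rule powr_mono') (use assms in auto)
    finally show "norm (scl r s w $ j) \<le> s powr Min (range r)" .
  qed
  finally show ?thesis by simp
qed

lemma cont_peval: "continuous_on S (peval (g::('n::finite) cpoly))"
  unfolding peval_def
  by (intro continuous_intros)

lemma cont_normgrad: "continuous_on S (\<lambda>w. norm (grad (f::('n::finite) cpoly) w))"
  unfolding grad_def norm_vec_def L2_set_def
  by (simp add: peval_def) (intro continuous_intros)


lemma min_r:
  fixes r :: "'n::finite \<Rightarrow> real"
  assumes "\<forall>i. r i > 0"
  shows "Min (range r) > 0" "\<And>i. Min (range r) \<le> r i"
proof -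
  have "Min (range r) \<in> range r" by (rule Min_in) auto
  then show "Min (range r) > 0" using assms by auto
  show "\<And>i. Min (range r) \<le> r i" by (rule Min_le) auto
qed

lemma grad_scl:
  assumes "weighted_homogeneous f r d" "s > 0"
  shows "grad f (scl r s w) $ i = complex_of_real (s powr (d - r i)) * (grad f w $ i)"
  unfolding grad_def using hom_scale[OF wh_pderiv[OF assms(1)] assms(2)] by simp

definition SS :: "(complex^'n::finite) set" where
  "SS = {w. (\<forall>j. cmod (w$j) \<le> 1) \<and> (\<exists>j. cmod (w$j) = 1)}"

lemma compact_SS: "compact (SS :: (complex^'n::finite) set)"
proof (subst compact_eq_bounded_closed, rule conjI[rotated])
  have "(SS :: (complex^'n) set) = (\<Inter>j. {w. cmod (w$j) \<le> 1}) \<inter> (\<Union>j. {w. cmod (w$j) = 1})"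
    unfolding SS_def by auto
  also have "closed \<dots>"
  proof -
    have c1: "closed {w::complex^'n. cmod (w $ j) \<le> 1}" for j
      by (intro closed_Collect_le continuous_on_norm continuous_on_component continuous_on_id continuous_on_const)
    have c2: "closed {w::complex^'n. cmod (w $ j) = 1}" for j
      by (intro closed_Collect_eq continuous_on_norm continuous_on_component continuous_on_id continuous_on_const)
    show ?thesis using c1 c2 by (intro closed_Int closed_INT closed_UN) auto
  qed
  finally show "closed (SS :: (complex^'n) set)" .
  show "bounded (SS :: (complex^'n) set)"
  proof (rule boundedI)
    fix w :: "complex^'n" assume "w \<in> SS"
    then have "\<forall>j. cmod (w$j) \<le> 1" by (simp add: SS_def)
    have "norm w \<le> (\<Sum>j\<in>UNIV. norm (w $ j))"
      unfolding norm_vec_def by (rule L2_set_le_sum) auto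
    also have "\<dots> \<le> (\<Sum>j\<in>(UNIV::'n set). 1)" by (rule sum_mono) (use \<open>\<forall>j. cmod (w$j) \<le> 1\<close> in auto)
    finally show "norm w \<le> real CARD('n)" by simp
  qed
qed

lemma SS_ne: "(\<chi> j. 1) \<in> (SS :: (complex^'n::finite) set)"
  unfolding SS_def by auto

lemma grad_nz_SS:
  fixes f :: "('n::finite) cpoly"
  assumes r: "\<forall>i. r i > 0" and wh: "weighted_homogeneous f r d"
    and iso: "isolated_singularity_origin f" and w: "w \<in> SS"
  shows "grad f w \<noteq> 0"
proof
  assume g0: "grad f w = 0"
  obtain \<epsilon> where e: "\<epsilon> > 0" "\<And>z::complex^'n. norm z < \<epsilon> \<and> grad f z = 0 \<Longrightarrow> z = 0"
    using iso unfolding isolated_singularity_origin_def by blast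
  define rm where "rm = Min (range r)"
  have rm: "rm > 0" "\<And>i. rm \<le> r i" using min_r[OF r] by (auto simp: rm_def)
  define N where "N = real CARD('n)"
  have N: "N > 0" by (simp add: N_def)
  define s where "s = min 1 ((\<epsilon> / (2*N)) powr (1/rm))"
  have s: "s > 0" "s \<le> 1" using e N by (auto simp: s_def)
  have "s powr rm \<le> ((\<epsilon> / (2*N)) powr (1/rm)) powr rm"
    by (rule powr_mono2) (use rm s in \<open>auto simp: s_def\<close>)
  also have "\<dots> = \<epsilon> / (2*N)" using rm e N by (simp add: powr_powr)
  finally have sp: "s powr rm \<le> \<epsilon> / (2*N)" .
  have wb: "\<forall>j. cmod (w$j) \<le> 1" using w by (simp add: SS_def)
  have "norm (scl r s w) \<le> N * s powr rm"
    using norm_scl_le[OF r s wb] by (simp add: N_def rm_def)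
  also have "\<dots> \<le> N * (\<epsilon> / (2*N))" using sp N by (intro mult_left_mono) auto
  also have "\<dots> < \<epsilon>" using N e by (simp add: field_simps)
  finally have nl: "norm (scl r s w) < \<epsilon>" .
  have "grad f (scl r s w) = 0"
    using g0 grad_scl[OF wh s(1)] by (simp add: vec_eq_iff)
  with nl e have "scl r s w = 0" by blast
  moreover obtain j where "cmod (w$j) = 1" using w by (auto simp: SS_def)
  ultimately have "complex_of_real (s powr r j) * w$j = 0"
    by (metis scl_def vec_lambda_beta zero_index)
  then show False using s \<open>cmod (w$j) = 1\<close> by auto
qed


lemma main_bound:
  fixes f :: "('n::finite) cpoly"
  assumes r: "\<forall>i. r i > 0" and wh: "weighted_homogeneous f r d"
    and iso: "isolated_singularity_origin f"
  shows "d / Min (range r) - 1 \<ge> 0 \<and> (\<exists>c>0. \<forall>z::complex^'n. norm z < 1 \<longrightarrow>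
           c * norm z powr (d / Min (range r) - 1) \<le> norm (grad f z))"
proof -
  define rm where "rm = Min (range r)"
  have rm: "rm > 0" "\<And>i. rm \<le> r i" using min_r[OF r] by (auto simp: rm_def)
  define N where "N = real CARD('n)"
  have N: "N > 0" by (simp add: N_def)
  define \<eta> where "\<eta> = d / rm - 1"
  obtain w0 where w0: "w0 \<in> SS" "\<And>w. w \<in> SS \<Longrightarrow> norm (grad f w0) \<le> norm (grad f w)"
    using continuous_attains_inf[OF compact_SS, of "\<lambda>w. norm (grad f w)"] SS_ne cont_normgrad
    by blast
  define m where "m = norm (grad f w0)"
  have gnz: "grad f w0 \<noteq> 0" using grad_nz_SS[OF r wh iso w0(1)] .
  then have m: "m > 0" by (simp add: m_def)
  from gnz obtain i where "grad f w0 $ i \<noteq> 0" by (auto simp: vec_eq_iff)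
  then have "peval (pderiv_poly i f) w0 \<noteq> 0" by (simp add: grad_def)
  then obtain \<nu> where nu: "\<nu> \<in> supp_poly (pderiv_poly i f)"
    unfolding peval_def by (meson sum.neutral)
  have "(\<Sum>j\<in>UNIV. r j * real (\<nu> j)) = d - r i"
    using wh_pderiv[OF wh, of i] nu by (simp add: weighted_homogeneous_def)
  moreover have "(\<Sum>j\<in>UNIV. r j * real (\<nu> j)) \<ge> 0"
    using r by (intro sum_nonneg) (simp add: less_imp_le)
  ultimately have "d \<ge> r i" by simp
  with rm have drm: "d \<ge> rm" by (meson order_trans)
  then have eta: "\<eta> \<ge> 0" using rm by (simp add: \<eta>_def field_simps)
  define c where "c = m / N powr \<eta>"
  have c: "c > 0" using m N by (simp add: c_def)
  have key: "c * norm z powr \<eta> \<le> norm (grad f z)" if z1: "norm z < 1" for z :: "complex^'n"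
  proof (cases "z = 0")
    case True then show ?thesis by simp
  next
    case False
    then obtain jz where "z $ jz \<noteq> 0" by (auto simp: vec_eq_iff)
    define t where "t = Max (range (\<lambda>j. cmod (z$j) powr (1 / r j)))"
    have tge: "cmod (z$j) powr (1 / r j) \<le> t" for j unfolding t_def by (rule Max_ge) auto
    obtain j0 where j0: "t = cmod (z$j0) powr (1 / r j0)"
    proof -
      have "t \<in> range (\<lambda>j. cmod (z$j) powr (1 / r j))" unfolding t_def by (rule Max_in) auto
      then show ?thesis using that by auto
    qed
    have t0: "t > 0" using tge[of jz] \<open>z $ jz \<noteq> 0\<close> by (smt (verit) powr_gt_zero zero_less_norm_iff)
    have t1: "t \<le> 1"
    proof -
      have "cmod (z$j0) < 1" using z1 Finite_Cartesian_Product.norm_nth_le[of z j0] by linarith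
      then have "cmod (z$j0) powr (1 / r j0) < 1 powr (1 / r j0)"
        using r by (intro powr_less_mono2) auto
      then show ?thesis using j0 by simp
    qed
    have zle: "cmod (z$j) \<le> t powr r j" for j
    proof -
      have "(cmod (z$j) powr (1 / r j)) powr r j \<le> t powr r j"
        using tge[of j] r by (intro powr_mono2) (auto simp: less_imp_le)
      moreover have "(cmod (z$j) powr (1 / r j)) powr r j = cmod (z$j)"
        using r[rule_format, of j] by (simp add: powr_powr)
      ultimately show ?thesis by simp
    qed
    have zeq: "cmod (z$j0) = t powr r j0"
    proof -
      have "t powr r j0 = (cmod (z$j0) powr (1 / r j0)) powr r j0" using j0 by simp
      also have "\<dots> = cmod (z$j0)" using r[rule_format, of j0] by (simp add: powr_powr)
      finally show ?thesis by simp
    qed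
    define w where "w = (\<chi> j. z$j / complex_of_real (t powr r j))"
    have zw: "z = scl r t w"
      unfolding scl_def w_def using t0 by (simp add: vec_eq_iff)
    have wj: "cmod (w$j) = cmod (z$j) / t powr r j" for j
      unfolding w_def using t0 by (simp add: norm_divide)
    have wb: "\<forall>j. cmod (w$j) \<le> 1" using wj zle t0 by (simp add: divide_le_eq_1)
    have "w \<in> SS" unfolding SS_def using wb wj[of j0] zeq t0 by auto
    then have mw: "m \<le> norm (grad f w)" using w0(2) by (simp add: m_def)
    have "t powr (d - rm) * norm (grad f w) = L2_set (\<lambda>i. t powr (d - rm) * norm (grad f w $ i)) UNIV"
      unfolding norm_vec_def by (rule L2_set_right_distrib) simp
    also have "\<dots> \<le> L2_set (\<lambda>i. norm (grad f z $ i)) UNIV"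
    proof (rule L2_set_mono)
      fix i :: 'n
      have "grad f z $ i = complex_of_real (t powr (d - r i)) * (grad f w $ i)"
        using zw grad_scl[OF wh t0] by simp
      then have "norm (grad f z $ i) = t powr (d - r i) * norm (grad f w $ i)"
        by (simp add: norm_mult)
      moreover have "t powr (d - rm) \<le> t powr (d - r i)"
        using rm t0 t1 by (intro powr_mono') auto
      ultimately show "t powr (d - rm) * norm (grad f w $ i) \<le> norm (grad f z $ i)"
        by (simp add: mult_right_mono)
    qed simp
    finally have g1: "t powr (d - rm) * norm (grad f w) \<le> norm (grad f z)"
      by (simp add: norm_vec_def)
    have "norm z \<le> N * t powr rm"
      using zw norm_scl_le[OF r t0 t1 wb] by (simp add: N_def rm_def)
    then have nz: "norm z / N \<le> t powr rm" using N by (simp add: divide_le_eq mult.commute)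
    have "t powr (d - rm) = (t powr rm) powr \<eta>"
    proof -
      have "rm * \<eta> = d - rm" using rm by (simp add: \<eta>_def field_simps)
      then show ?thesis by (simp add: powr_powr)
    qed
    also have "\<dots> \<ge> (norm z / N) powr \<eta>"
      using nz eta N by (intro powr_mono2) auto
    finally have tp: "(norm z / N) powr \<eta> \<le> t powr (d - rm)" .
    have "c * norm z powr \<eta> = m * (norm z / N) powr \<eta>"
      using N by (simp add: c_def powr_divide)
    also have "\<dots> \<le> norm (grad f w) * t powr (d - rm)"
      using mw tp m by (intro mult_mono) auto
    also have "\<dots> \<le> norm (grad f z)" using g1 by (simp add: mult.commute)
    finally show ?thesis .
  qed
  show ?thesis using eta c key by (auto simp: \<eta>_def rm_def)
qed


theorem theorem19:
  fixes f :: "('n::finite) cpoly" and r :: "'n \<Rightarrow> real" and d :: real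
  assumes "is_poly f"
    and "\<forall>i. r i > 0"
    and "d > 0"
    and "weighted_homogeneous f r d"
    and "nondegenerate f"
    and "loj_nondegenerate f"
    and "isolated_singularity_origin f"
    and "newton_boundary_dim f = int CARD('n) - 1"
  shows "loj_exponent f \<le> d / Min (range r) - 1"
proof -
  define \<eta> where "\<eta> = d / Min (range r) - 1"
  from main_bound[OF assms(2) assms(4) assms(7)] obtain c where
    eta: "\<eta> \<ge> 0" and c: "c > 0"
    and key: "\<And>z::complex^'n. norm z < 1 \<Longrightarrow> c * norm z powr \<eta> \<le> norm (grad f z)"
    unfolding \<eta>_def by blast
  define A where "A = {\<theta>. \<theta> > 0 \<and> (\<exists>c>0. \<exists>\<epsilon>>0. \<forall>z::complex^'n.
       norm z < \<epsilon> \<longrightarrow> norm (grad f z) \<ge> c * norm z powr \<theta>)}"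
  have bdd: "bdd_below A" unfolding A_def by (rule bdd_belowI[of _ 0]) auto
  have "loj_exponent f \<le> \<eta> + e" if e: "e > 0" for e
  proof -
    have ineq: "\<forall>z::complex^'n. norm z < 1 \<longrightarrow> norm (grad f z) \<ge> c * norm z powr (\<eta> + e)"
    proof (intro allI impI)
      fix z :: "complex^'n" assume z: "norm z < 1"
      have "norm z powr (\<eta> + e) \<le> norm z powr \<eta>"
        using z eta e by (intro powr_mono') auto
      then have "c * norm z powr (\<eta> + e) \<le> c * norm z powr \<eta>"
        using c by (intro mult_left_mono) auto
      also have "\<dots> \<le> norm (grad f z)" using key z by blast
      finally show "c * norm z powr (\<eta> + e) \<le> norm (grad f z)" .
    qed
    have "\<eta> + e \<in> A"
    proof -
      have "\<exists>\<epsilon>>0. \<forall>z::complex^'n. norm z < \<epsilon> \<longrightarrow> norm (grad f z) \<ge> c * norm z powr (\<eta> + e)"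
        using ineq zero_less_one by blast
      then have "\<exists>c>0. \<exists>\<epsilon>>0. \<forall>z::complex^'n. norm z < \<epsilon> \<longrightarrow> norm (grad f z) \<ge> c * norm z powr (\<eta> + e)"
        using c by blast
      then show ?thesis unfolding A_def using eta e by simp
    qed
    then have "Inf A \<le> \<eta> + e" using bdd by (rule cInf_lower)
    then show ?thesis by (simp add: loj_exponent_def A_def)
  qed
  then have "loj_exponent f \<le> \<eta>" by (rule field_le_epsilon)
  then show ?thesis by (simp add: \<eta>_def)
qed

end
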